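(* Let $\mathcal{X}$ be a feature set, $\mathcal{Y}^*$ a convex subset of a Euclidean space, $\mathcal{F}$ the set of all maps $\mathcal{X}\to\mathcal{Y}^*$, and $\mathcal{F}^T\subseteq\mathcal{F}$ an allowable function class. Let $f^*\in\mathcal{F}$ be the true function and $\widehat f^*\in\mathcal{F}$ an estimate of it. Let $\ell:\mathcal{Y}^*\times\mathcal{Y}^*\to\mathbb{R}_+$ be differentiable with gradients bounded in norm by some $K<\infty$ and convex in its second argument. Fix $n\ge1$ and suppose: (i) (approximate minimization) for every $x_{1:n}=(x_1,\dots,x_n)\in\mathcal{X}^n$ there is a returned $\widetilde f^T(\cdot;x_{1:n})\in\mathcal{F}^T$ with $n^{-1}\sum_{i=1}^n\ell(\widetilde f^T(x_i;x_{1:n}),\widehat f^*(x_i))\le\min_{f\in\mathcal{F}^T}n^{-1}\sum_{i=1}^n\ell(f(x_i),\widehat f^*(x_i))+\delta$ for some $\delta\ge0$; (ii) (approximate maximization) the returned $\widetilde x_{1:n}\in\mathcal{X}^n$ satisfies $n^{-1}\sum_{i=1}^n\ell(\widetilde f^T(\widetilde x_i;\widetilde x_{1:n}),\widehat f^*(\widetilde x_i))\ge\max_{x_{1:n}}n^{-1}\sum_{i=1}^n\ell(\widetilde f^T(x_i;x_{1:n}),\widehat f^*(x_i))-\nu$ for some $\nu\ge0$. Define $\widehat{\mathcal{E}}:=n^{-1}\sum_{i=1}^n\ell(\widetilde f^T(\widetilde x_i;\widetilde x_{1:n}),\widehat f^*(\widetilde x_i))$ and $\mathcal{E}:=\max_{x_{1:n}\in\mathcal{X}^n}\min_{f\in\mathcal{F}^T}n^{-1}\sum_{i=1}^n\ell(f(x_i),f^*(x_i))$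 (all maxima and minima assumed attained). Then $$|\widehat{\mathcal{E}}-\mathcal{E}|\le(\delta+\nu)+3K\,\|\widehat f^*-f^*\|_\infty,$$ where $\|f_1-f_2\|_\infty=\sup_{x\in\mathcal{X}}|f_1(x)-f_2(x)|$.
   Context: The quantity $\mathcal{E}$ is the population value of the falsifier's max-min program and $\widehat{\mathcal{E}}$ is the value attained by the plug-in program in which $f^*$ is replaced by the estimate $\widehat f^*$ and the inner minimization and outer maximization are carried out by approximate routines with optimality gaps $\delta$ and $\nu$. *)

theory Defs
  imports "HOL-Analysis.Analysis"
begin

definition avg_loss :: "('y \<Rightarrow> 'y \<Rightarrow> real) \<Rightarrow> ('x \<Rightarrow> 'y) \<Rightarrow> ('x \<Rightarrow> 'y) \<Rightarrow> 'x list \<Rightarrow> real" where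
  "avg_loss l f g xs = (\<Sum>i<length xs. l (f (xs ! i)) (g (xs ! i))) / real (length xs)"

definition sup_dist :: "('x \<Rightarrow> 'y::real_normed_vector) \<Rightarrow> ('x \<Rightarrow> 'y) \<Rightarrow> ereal" where
  "sup_dist f1 f2 = (SUP x. ereal (norm (f1 x - f2 x)))"

end

theory Submission
  imports Defs
begin

lemma avg_diff:
  assumes "\<And>i. i < length xs \<Longrightarrow> \<bar>l (f (xs!i)) (g (xs!i)) - l (f (xs!i)) (h (xs!i))\<bar> \<le> C"
    and "length xs \<ge> 1"
  shows "\<bar>avg_loss l f g xs - avg_loss l f h xs\<bar> \<le> C"
proof -
  let ?m = "length xs"
  have "\<bar>(\<Sum>i<?m. l (f (xs!i)) (g (xs!i))) - (\<Sum>i<?m. l (f (xs!i)) (h (xs!i)))\<bar>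
        = \<bar>\<Sum>i<?m. l (f (xs!i)) (g (xs!i)) - l (f (xs!i)) (h (xs!i))\<bar>"
    by (simp add: sum_subtractf)
  also have "\<dots> \<le> (\<Sum>i<?m. \<bar>l (f (xs!i)) (g (xs!i)) - l (f (xs!i)) (h (xs!i))\<bar>)"
    by (rule sum_abs)
  also have "\<dots> \<le> (\<Sum>i<?m. C)" by (rule sum_mono) (use assms(1) in auto)
  also have "\<dots> = real ?m * C" by simp
  finally have *: "\<bar>(\<Sum>i<?m. l (f (xs!i)) (g (xs!i))) - (\<Sum>i<?m. l (f (xs!i)) (h (xs!i)))\<bar> \<le> real ?m * C" .
  have pos: "real ?m > 0" using assms(2) by (simp add: Suc_le_eq)
  have "avg_loss l f g xs - avg_loss l f h xs =
        ((\<Sum>i<?m. l (f (xs!i)) (g (xs!i))) - (\<Sum>i<?m. l (f (xs!i)) (h (xs!i)))) / real ?m"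
    unfolding avg_loss_def by (simp add: diff_divide_distrib)
  hence "\<bar>avg_loss l f g xs - avg_loss l f h xs\<bar> =
        \<bar>(\<Sum>i<?m. l (f (xs!i)) (g (xs!i))) - (\<Sum>i<?m. l (f (xs!i)) (h (xs!i)))\<bar> / real ?m"
    using pos by simp
  also have "\<dots> \<le> real ?m * C / real ?m" by (rule divide_right_mono[OF *]) simp
  also have "\<dots> = C" using pos by simp
  finally show ?thesis .
qed

theorem proposition1:
  fixes Ystar :: "'y::euclidean_space set"
    and FT :: "('x \<Rightarrow> 'y) set"
    and fstar fhat :: "'x \<Rightarrow> 'y"
    and l :: "'y \<Rightarrow> 'y \<Rightarrow> real"
    and K \<delta> \<nu> :: real
    and n :: nat
    and ftil :: "'x list \<Rightarrow> 'x \<Rightarrow> 'y"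
    and xtil :: "'x list"
  assumes conv: "convex Ystar"
    and FT_maps: "\<forall>f\<in>FT. \<forall>x. f x \<in> Ystar"
    and fstar_maps: "\<forall>x. fstar x \<in> Ystar"
    and fhat_maps: "\<forall>x. fhat x \<in> Ystar"
    and l_nonneg: "\<forall>u\<in>Ystar. \<forall>v\<in>Ystar. l u v \<ge> 0"
    and l_diff: "\<forall>z\<in>Ystar \<times> Ystar. \<exists>D.
                   ((\<lambda>p. l (fst p) (snd p)) has_derivative D) (at z within Ystar \<times> Ystar)
                   \<and> onorm D \<le> K"
    and l_convex: "\<forall>u\<in>Ystar. convex_on Ystar (l u)"
    and n_pos: "n \<ge> 1"
    and delta_nonneg: "\<delta> \<ge> 0"
    and nu_nonneg: "\<nu> \<ge> 0"
    and min_hat_att: "\<forall>xs. length xs = n \<longrightarrow>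
                        (\<exists>f\<in>FT. \<forall>g\<in>FT. avg_loss l f fhat xs \<le> avg_loss l g fhat xs)"
    and min_star_att: "\<forall>xs. length xs = n \<longrightarrow>
                        (\<exists>f\<in>FT. \<forall>g\<in>FT. avg_loss l f fstar xs \<le> avg_loss l g fstar xs)"
    and approx_min: "\<forall>xs. length xs = n \<longrightarrow> ftil xs \<in> FT \<and>
                        avg_loss l (ftil xs) fhat xs \<le> (INF f\<in>FT. avg_loss l f fhat xs) + \<delta>"
    and max_til_att: "\<exists>xs0. length xs0 = n \<and> (\<forall>xs. length xs = n \<longrightarrow>
                        avg_loss l (ftil xs) fhat xs \<le> avg_loss l (ftil xs0) fhat xs0)"
    and max_star_att: "\<exists>xs0. length xs0 = n \<and> (\<forall>xs. length xs = n \<longrightarrow>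
                        (INF f\<in>FT. avg_loss l f fstar xs) \<le> (INF f\<in>FT. avg_loss l f fstar xs0))"
    and xtil_len: "length xtil = n"
    and approx_max: "avg_loss l (ftil xtil) fhat xtil \<ge>
                        (SUP xs\<in>{xs. length xs = n}. avg_loss l (ftil xs) fhat xs) - \<nu>"
  shows "ereal \<bar>avg_loss l (ftil xtil) fhat xtil
                  - (SUP xs\<in>{xs. length xs = n}. INF f\<in>FT. avg_loss l f fstar xs)\<bar>
           \<le> ereal (\<delta> + \<nu>) + ereal (3 * K) * sup_dist fhat fstar"
proof -
  define S where "S = Ystar \<times> Ystar"
  obtain D where D: "\<And>z. z \<in> S \<Longrightarrow> ((\<lambda>p. l (fst p) (snd p)) has_derivative D z) (at z within S) \<and> onorm (D z) \<le> K"
    using l_diff unfolding S_def by metis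
  have convS: "convex S" unfolding S_def using conv by (simp add: convex_Times)
  have lip: "\<bar>l u v - l u v'\<bar> \<le> K * norm (v - v')" if "u \<in> Ystar" "v \<in> Ystar" "v' \<in> Ystar" for u v v'
  proof -
    have "norm ((\<lambda>p. l (fst p) (snd p)) (u,v) - (\<lambda>p. l (fst p) (snd p)) (u,v')) \<le> K * norm ((u,v) - (u,v'))"
      by (rule differentiable_bound[OF convS, of _ D]) (use D that in \<open>auto simp: S_def\<close>)
    thus ?thesis by (simp add: norm_Pair)
  qed
  have Kpos: "K \<ge> 0"
  proof -
    have z: "(fstar undefined, fstar undefined) \<in> S" using fstar_maps by (simp add: S_def)
    from D[OF z] have "bounded_linear (D (fstar undefined, fstar undefined))"
      using has_derivative_bounded_linear by blast
    with D[OF z] show ?thesis using onorm_pos_le by fastforce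
  qed
  have core: "\<bar>avg_loss l (ftil xtil) fhat xtil
                  - (SUP xs\<in>{xs. length xs = n}. INF f\<in>FT. avg_loss l f fstar xs)\<bar> \<le> \<delta> + \<nu> + C"
    if C: "\<And>u x. u \<in> Ystar \<Longrightarrow> \<bar>l u (fhat x) - l u (fstar x)\<bar> \<le> C" for C
  proof -
    define A where "A xs = (INF f\<in>FT. avg_loss l f fhat xs)" for xs
    define B where "B xs = (INF f\<in>FT. avg_loss l f fstar xs)" for xs
    have dif: "\<bar>avg_loss l f fhat xs - avg_loss l f fstar xs\<bar> \<le> C" if "f \<in> FT" "length xs = n" for f xs
      by (rule avg_diff) (use C FT_maps that n_pos in auto)
    have Aeq: "\<exists>f\<in>FT. A xs = avg_loss l f fhat xs \<and> (\<forall>g\<in>FT. avg_loss l f fhat xs \<le> avg_loss l g fhat xs)"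
      if L: "length xs = n" for xs
    proof -
      obtain f where f: "f \<in> FT" "\<forall>g\<in>FT. avg_loss l f fhat xs \<le> avg_loss l g fhat xs"
        using min_hat_att L by blast
      have "A xs = avg_loss l f fhat xs" unfolding A_def
        by (rule cInf_eq_minimum) (use f in auto)
      thus ?thesis using f by blast
    qed
    have Beq: "\<exists>f\<in>FT. B xs = avg_loss l f fstar xs \<and> (\<forall>g\<in>FT. avg_loss l f fstar xs \<le> avg_loss l g fstar xs)"
      if L: "length xs = n" for xs
    proof -
      obtain f where f: "f \<in> FT" "\<forall>g\<in>FT. avg_loss l f fstar xs \<le> avg_loss l g fstar xs"
        using min_star_att L by blast
      have "B xs = avg_loss l f fstar xs" unfolding B_def
        by (rule cInf_eq_minimum) (use f in auto)
      thus ?thesis using f by blast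
    qed
    have AB: "A xs \<le> B xs + C" "B xs \<le> A xs + C" if L: "length xs = n" for xs
    proof -
      obtain f where f: "f\<in>FT" "A xs = avg_loss l f fhat xs" "\<forall>g\<in>FT. avg_loss l f fhat xs \<le> avg_loss l g fhat xs"
        using Aeq[OF L] by blast
      obtain g where g: "g\<in>FT" "B xs = avg_loss l g fstar xs" "\<forall>h\<in>FT. avg_loss l g fstar xs \<le> avg_loss l h fstar xs"
        using Beq[OF L] by blast
      have "A xs \<le> avg_loss l g fhat xs" using f g by auto
      also have "\<dots> \<le> B xs + C" using dif[OF g(1) L] g(2) by linarith
      finally show "A xs \<le> B xs + C" .
      have "B xs \<le> avg_loss l f fstar xs" using f g by auto
      also have "\<dots> \<le> A xs + C" using dif[OF f(1) L] f(2) by linarith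
      finally show "B xs \<le> A xs + C" .
    qed
    obtain x0 where x0: "length x0 = n" "\<And>xs. length xs = n \<Longrightarrow> B xs \<le> B x0"
      using max_star_att unfolding B_def by blast
    have E: "(SUP xs\<in>{xs. length xs = n}. INF f\<in>FT. avg_loss l f fstar xs) = B x0"
      unfolding B_def[symmetric]
      by (rule cSup_eq_maximum) (use x0 in auto)
    obtain x1 where x1: "length x1 = n" "\<And>xs. length xs = n \<Longrightarrow> avg_loss l (ftil xs) fhat xs \<le> avg_loss l (ftil x1) fhat x1"
      using max_til_att by blast
    have bdd: "bdd_above ((\<lambda>xs. avg_loss l (ftil xs) fhat xs) ` {xs. length xs = n})"
      using x1 by (auto intro!: bdd_aboveI)
    let ?Eh = "avg_loss l (ftil xtil) fhat xtil"
    have up: "?Eh \<le> B x0 + C + \<delta>"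
    proof -
      have "?Eh \<le> A xtil + \<delta>" using approx_min xtil_len unfolding A_def by blast
      also have "\<dots> \<le> B xtil + C + \<delta>" using AB(1)[OF xtil_len] by simp
      also have "\<dots> \<le> B x0 + C + \<delta>" using x0(2)[OF xtil_len] by simp
      finally show ?thesis .
    qed
    have lo: "B x0 - C - \<nu> \<le> ?Eh"
    proof -
      have "B x0 - C \<le> A x0" using AB(2)[OF x0(1)] by simp
      also have "\<dots> \<le> avg_loss l (ftil x0) fhat x0"
        using Aeq[OF x0(1)] approx_min x0(1) by auto
      also have "\<dots> \<le> (SUP xs\<in>{xs. length xs = n}. avg_loss l (ftil xs) fhat xs)"
        by (rule cSUP_upper) (use x0 bdd in auto)
      finally show ?thesis using approx_max by linarith
    qed
    show ?thesis unfolding E abs_le_iff using up lo delta_nonneg nu_nonneg by linarith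
  qed
  have sd_nonneg: "sup_dist fhat fstar \<ge> 0"
    unfolding sup_dist_def by (rule order_trans[OF _ SUP_upper[of undefined]]) auto
  show ?thesis
  proof (cases "K = 0")
    case True
    have "\<bar>avg_loss l (ftil xtil) fhat xtil
                  - (SUP xs\<in>{xs. length xs = n}. INF f\<in>FT. avg_loss l f fstar xs)\<bar> \<le> \<delta> + \<nu> + 0"
    proof (rule core)
      fix u x assume u: "u \<in> Ystar"
      have "\<bar>l u (fhat x) - l u (fstar x)\<bar> \<le> K * norm (fhat x - fstar x)"
        using lip[OF u] fhat_maps fstar_maps by blast
      thus "\<bar>l u (fhat x) - l u (fstar x)\<bar> \<le> 0" using True by simp
    qed
    thus ?thesis using True by (simp add: zero_ereal_def[symmetric])
  next
    case False
    hence Kp: "K > 0" using Kpos by simp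
    show ?thesis
    proof (cases "sup_dist fhat fstar = \<infinity>")
      case True
      then show ?thesis using Kp by simp
    next
      case False
      then obtain d where d: "sup_dist fhat fstar = ereal d" using sd_nonneg
        by (cases "sup_dist fhat fstar") auto
      have nd: "norm (fhat x - fstar x) \<le> d" for x
      proof -
        have "ereal (norm (fhat x - fstar x)) \<le> sup_dist fhat fstar"
          unfolding sup_dist_def by (rule SUP_upper) auto
        thus ?thesis using d by simp
      qed
      have "\<bar>avg_loss l (ftil xtil) fhat xtil
                  - (SUP xs\<in>{xs. length xs = n}. INF f\<in>FT. avg_loss l f fstar xs)\<bar> \<le> \<delta> + \<nu> + K * d"
      proof (rule core)
        fix u x assume "u \<in> Ystar"
        hence "\<bar>l u (fhat x) - l u (fstar x)\<bar> \<le> K * norm (fhat x - fstar x)"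
          using lip fhat_maps fstar_maps by blast
        also have "\<dots> \<le> K * d" using nd Kpos by (simp add: mult_left_mono)
        finally show "\<bar>l u (fhat x) - l u (fstar x)\<bar> \<le> K * d" .
      qed
      moreover have "K * d \<le> 3 * K * d"
      proof -
        have "0 \<le> d" using nd[of undefined] norm_ge_zero[of "fhat undefined - fstar undefined"] by linarith
        thus ?thesis using Kp by (simp add: mult_right_mono)
      qed
      ultimately show ?thesis using d by simp
    qed
  qed
qed

end
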